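(* Let $v:\mathbb X\times\mathbb X\to[0,\infty]$ be a measurable symmetric pair potential and $z:\mathbb X\to[0,\infty)$ measurable with $\int_Bz\,d\lambda<\infty$ for all $B\in\mathcal X_{\mathsf b}$; assume $f\le 0$ $\lambda^2$-a.e., and let $a:\mathbb X\to[0,\infty)$ measurable and $t>0$ be such that for $\lambda$-almost all $x_0\in\mathbb X$, $$\sum_{k=1}^\infty\frac{e^{tk}}{k!}\int_{\mathbb X^k}\prod_{j=1}^k|f(x_0,y_j)|\prod_{1\le i<j\le k}\bigl(1+f(y_i,y_j)\bigr)\prod_{j=1}^k z(y_j)e^{a(y_j)}\,d\lambda^k(\mathbf y)\le e^{a(x_0)}-1.$$ Then $K_z$ is a bounded linear operator on the Banach space $E$ with operator norm $\|K_z\|\le e^{-t}<1$.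
   Context: $(\mathbb X,\mathcal X)$ is a complete separable metric space with Borel $\sigma$-algebra, $\mathcal X_{\mathsf b}$ the bounded Borel sets, $\lambda$ a measure finite on bounded sets; $f(x,y)=e^{-v(x,y)}-1$. $E_0$ is the space of sequences $\boldsymbol\rho=(\rho_n)_{n\in\mathbb N}$ of measurable $\rho_n:\mathbb X^n\to\mathbb R$ for which there is $C\ge0$ with $|\rho_n(x_1,\dots,x_n)|\le Ce^{tn}\prod_{1\le i<j\le n}(1+f(x_i,x_j))\prod_{i=1}^nz(x_i)e^{a(x_i)}$ for all $n$ and $\lambda^n$-almost all $\mathbf x$; $\|\boldsymbol\rho\|_0$ is the smallest such $C$, and $E$ is the quotient of $E_0$ by $\{\|\boldsymbol\rho\|_0=0\}$ with the induced norm (a Banach space). The operator $K_z$ is defined by $(K_z\boldsymbol\rho)_1(x_0)=z(x_0)\sum_{k\ge1}\frac1{k!}\int_{\mathbb X^k}\prod_{j=1}^kf(x_0,y_j)\rho_k(y_1,\dots,y_k)\,d\lambda^k(\mathbf y)$ and, for $n\in\mathbb N$, $(K_z\boldsymbol\rho)_{n+1}(x_0,\dots,x_n)=z(x_0)\prod_{i=1}^n(1+f(x_0,x_i))\bigl(\rho_n(x_1,\dots,x_n)+\sum_{k\ge1}\frac1{k!}\int_{\mathbb X^k}\prod_{j=1}^kf(x_0,y_j)\rho_{n+k}(x_1,\dots,x_n,y_1,\dots,y_k)\,d\lambda^k(\mathbf y)\bigr)$. *)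

theory Defs
  imports "HOL-Analysis.Analysis"
begin

definition mayer :: "('a \<Rightarrow> 'a \<Rightarrow> ennreal) \<Rightarrow> 'a \<Rightarrow> 'a \<Rightarrow> real" where
  "mayer v x y = (if v x y = \<infinity> then -1 else exp (- enn2real (v x y)) - 1)"

definition PX :: "'a measure \<Rightarrow> nat \<Rightarrow> (nat \<Rightarrow> 'a) measure" where
  "PX lam n = PiM {..<n} (\<lambda>_. lam)"

definition weight :: "('a \<Rightarrow> 'a \<Rightarrow> ennreal) \<Rightarrow> ('a \<Rightarrow> real) \<Rightarrow> ('a \<Rightarrow> real) \<Rightarrow> real
    \<Rightarrow> nat \<Rightarrow> (nat \<Rightarrow> 'a) \<Rightarrow> real" where
  "weight v z a t n x = exp (t * real n) * (\<Prod>j<n. \<Prod>i<j. 1 + mayer v (x i) (x j))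
     * (\<Prod>i<n. z (x i) * exp (a (x i)))"

text \<open>Sequences rho = (rho_n)_{n>=1}; the entry rho 0 is ignored.\<close>
definition E0 :: "'a measure \<Rightarrow> ('a \<Rightarrow> 'a \<Rightarrow> ennreal) \<Rightarrow> ('a \<Rightarrow> real) \<Rightarrow> ('a \<Rightarrow> real) \<Rightarrow> real
    \<Rightarrow> (nat \<Rightarrow> (nat \<Rightarrow> 'a) \<Rightarrow> real) set" where
  "E0 lam v z a t = {\<rho>. (\<forall>n\<ge>1. \<rho> n \<in> borel_measurable (PX lam n)) \<and>
     (\<exists>C\<ge>0. \<forall>n\<ge>1. AE x in PX lam n. \<bar>\<rho> n x\<bar> \<le> C * weight v z a t n x)}"

definition norm0 :: "'a measure \<Rightarrow> ('a \<Rightarrow> 'a \<Rightarrow> ennreal) \<Rightarrow> ('a \<Rightarrow> real) \<Rightarrow> ('a \<Rightarrow> real) \<Rightarrow> real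
    \<Rightarrow> (nat \<Rightarrow> (nat \<Rightarrow> 'a) \<Rightarrow> real) \<Rightarrow> real" where
  "norm0 lam v z a t \<rho> = Inf {C. 0 \<le> C \<and>
     (\<forall>n\<ge>1. AE x in PX lam n. \<bar>\<rho> n x\<bar> \<le> C * weight v z a t n x)}"

text \<open>Integrand of the k-th term for (K rho)_{n+1}(x_0,...,x_n):
  prod_{j<k} f(x_0,y_j) * rho_{n+k}(x_1,...,x_n,y_1,...,y_k).\<close>
definition Kint :: "('a \<Rightarrow> 'a \<Rightarrow> ennreal) \<Rightarrow> (nat \<Rightarrow> (nat \<Rightarrow> 'a) \<Rightarrow> real) \<Rightarrow> nat
    \<Rightarrow> (nat \<Rightarrow> 'a) \<Rightarrow> nat \<Rightarrow> (nat \<Rightarrow> 'a) \<Rightarrow> real" where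
  "Kint v \<rho> n x k y = (\<Prod>j<k. mayer v (x 0) (y j)) *
     \<rho> (n + k) (\<lambda>i\<in>{..<n + k}. if i < n then x (Suc i) else y (i - n))"

text \<open>The operator K_z; (K rho)_{n+1} at x = (x_0,...,x_n). For n = 0 the term rho_0 is absent.\<close>
definition Kop :: "'a measure \<Rightarrow> ('a \<Rightarrow> 'a \<Rightarrow> ennreal) \<Rightarrow> ('a \<Rightarrow> real)
    \<Rightarrow> (nat \<Rightarrow> (nat \<Rightarrow> 'a) \<Rightarrow> real) \<Rightarrow> nat \<Rightarrow> (nat \<Rightarrow> 'a) \<Rightarrow> real" where
  "Kop lam v z \<rho> m x = (case m of 0 \<Rightarrow> 0 | Suc n \<Rightarrow>
     z (x 0) * (\<Prod>i\<in>{1..n}. 1 + mayer v (x 0) (x i)) *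
     ((if n = 0 then 0 else \<rho> n (\<lambda>i\<in>{..<n}. x (Suc i))) +
      (\<Sum>k. (\<integral>y. Kint v \<rho> n x (Suc k) y \<partial>PX lam (Suc k)) / fact (Suc k))))"

end

theory Submission
  imports Defs
begin


lemma sf_lam:
  fixes lam :: "('a::polish_space) measure"
  assumes sets_lam: "sets lam = sets borel"
    and lam_fin: "\<And>B. B \<in> sets borel \<Longrightarrow> bounded B \<Longrightarrow> emeasure lam B < \<infinity>"
  shows "sigma_finite_measure lam"
proof -
  have sp: "space lam = UNIV" using sets_eq_imp_space_eq[OF sets_lam] by simp
  define c :: 'a where "c = undefined"
  show ?thesis
    unfolding sigma_finite_measure_def
  proof (intro exI[of _ "range (\<lambda>m::nat. ball c (real m))"] conjI)
    show "countable (range (\<lambda>m::nat. ball c (real m)))" by simp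
    show "range (\<lambda>m::nat. ball c (real m)) \<subseteq> sets lam"
      unfolding sets_lam by (auto intro: borel_open)
    show "\<Union> (range (\<lambda>m::nat. ball c (real m))) = space lam"
    proof -
      { fix x :: 'a
        obtain m :: nat where "dist c x < real m" using reals_Archimedean2 by blast
        then have "x \<in> \<Union> (range (\<lambda>m::nat. ball c (real m)))" by auto }
      then show ?thesis unfolding sp by blast
    qed
    show "\<forall>a\<in>range (\<lambda>m::nat. ball c (real m)). emeasure lam a \<noteq> \<infinity>"
    proof
      fix a assume "a \<in> range (\<lambda>m::nat. ball c (real m))"
      then obtain m :: nat where a: "a = ball c (real m)" by blast
      have "emeasure lam a < \<infinity>" unfolding a by (rule lam_fin) auto
      then show "emeasure lam a \<noteq> \<infinity>" by simp
    qed
  qed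
qed

lemma psf: "sigma_finite_measure lam \<Longrightarrow> product_sigma_finite (\<lambda>_::nat. lam)"
  by (simp add: product_sigma_finite_def)

lemma sf_PX: "sigma_finite_measure lam \<Longrightarrow> sigma_finite_measure (PX lam n)"
  unfolding PX_def by (rule product_sigma_finite.sigma_finite[OF psf]) auto

lemma prod_lessThan_add: "(\<Prod>i<n+k. F i) = (\<Prod>i<n. F i) * (\<Prod>i<k. F (n+i))"
  for F :: "nat \<Rightarrow> 'b::comm_monoid_mult"
  by (induction k) (simp_all add: mult.assoc)

definition app :: "nat \<Rightarrow> nat \<Rightarrow> (nat \<Rightarrow> 'a) \<Rightarrow> (nat \<Rightarrow> 'a) \<Rightarrow> (nat \<Rightarrow> 'a)" where
  "app n k x y = (\<lambda>i\<in>{..<n + k}. if i < n then x i else y (i - n))"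

lemma app_meas: "(\<lambda>p. app n k (fst p) (snd p)) \<in> measurable (PX lam n \<Otimes>\<^sub>M PX lam k) (PX lam (n+k))"
  unfolding app_def PX_def
proof (rule measurable_restrict)
  fix i assume i: "i \<in> {..<n+k}"
  show "(\<lambda>p. if i < n then fst p i else snd p (i - n)) \<in> measurable (PiM {..<n} (\<lambda>_. lam) \<Otimes>\<^sub>M PiM {..<k} (\<lambda>_. lam)) lam"
  proof (cases "i < n")
    case True then show ?thesis by simp
  next
    case False then show ?thesis using i by simp
  qed
qed

lemma distr_app:
  assumes "sigma_finite_measure lam"
  shows "distr (PX lam n \<Otimes>\<^sub>M PX lam k) (PX lam (n+k)) (\<lambda>p. app n k (fst p) (snd p)) = PX lam (n+k)"
proof -
  interpret P: product_sigma_finite "\<lambda>_::nat. lam" using psf[OF assms] .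
  interpret J: sigma_finite_measure "PX lam k" using sf_PX[OF assms] .
  interpret I: sigma_finite_measure "PX lam n" using sf_PX[OF assms] .
  show ?thesis unfolding PX_def[of lam "n+k"]
  proof (rule P.PiM_eqI)
    fix A assume A: "\<And>i. i \<in> {..<n+k} \<Longrightarrow> A i \<in> sets lam"
    have *: "(\<lambda>p. app n k (fst p) (snd p)) -` Pi\<^sub>E {..<n+k} A \<inter> space (PX lam n \<Otimes>\<^sub>M PX lam k)
       = Pi\<^sub>E {..<n} A \<times> Pi\<^sub>E {..<k} (\<lambda>i. A (n+i))"
      using A[THEN sets.sets_into_space]
    proof (intro set_eqI iffI)
      fix p assume p: "p \<in> (\<lambda>p. app n k (fst p) (snd p)) -` Pi\<^sub>E {..<n+k} A \<inter> space (PX lam n \<Otimes>\<^sub>M PX lam k)"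
      then obtain x y where xy: "p = (x,y)" "x \<in> space (PX lam n)" "y \<in> space (PX lam k)" "app n k x y \<in> Pi\<^sub>E {..<n+k} A"
        by (cases p) (auto simp: space_pair_measure)
      have "x \<in> Pi\<^sub>E {..<n} A"
      proof -
        { fix i assume "i < n" then have "x i \<in> A i" using xy(4) by (auto simp: app_def PiE_iff dest!: bspec[of _ _ i]) }
        then show ?thesis using xy(2) by (auto simp: PX_def space_PiM PiE_iff)
      qed
      moreover have "y \<in> Pi\<^sub>E {..<k} (\<lambda>i. A (n+i))"
      proof -
        { fix i assume "i < k" then have "y i \<in> A (n+i)" using xy(4) by (auto simp: app_def PiE_iff dest!: bspec[of _ _ "n+i"]) }
        then show ?thesis using xy(3) by (auto simp: PX_def space_PiM PiE_iff)
      qed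
      ultimately show "p \<in> Pi\<^sub>E {..<n} A \<times> Pi\<^sub>E {..<k} (\<lambda>i. A (n+i))" using xy by simp
    next
      fix p assume p: "p \<in> Pi\<^sub>E {..<n} A \<times> Pi\<^sub>E {..<k} (\<lambda>i. A (n+i))"
      then obtain x y where xy: "p = (x,y)" "x \<in> Pi\<^sub>E {..<n} A" "y \<in> Pi\<^sub>E {..<k} (\<lambda>i. A (n+i))" by auto
      have "x \<in> space (PX lam n)"
        unfolding PX_def space_PiM
        using xy(2) by (rule subsetD[OF PiE_mono, rotated]) (use A[THEN sets.sets_into_space] in auto)
      moreover have "y \<in> space (PX lam k)"
        unfolding PX_def space_PiM
        using xy(3) by (rule subsetD[OF PiE_mono, rotated]) (use A[THEN sets.sets_into_space] in auto)
      moreover have "app n k x y \<in> Pi\<^sub>E {..<n+k} A"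
      proof -
        { fix i assume i: "i < n+k"
          have "app n k x y i \<in> A i"
          proof (cases "i < n")
            case True then show ?thesis using xy(2) by (auto simp: app_def)
          next
            case False then have "i - n < k" "n + (i - n) = i" using i by auto
            have "y (i-n) \<in> A (n + (i-n))" using xy(3) \<open>i - n < k\<close> unfolding PiE_iff by blast
            then show ?thesis using False i \<open>n + (i - n) = i\<close> by (simp add: app_def)
          qed }
        then show ?thesis by (auto simp: app_def)
      qed
      ultimately show "p \<in> (\<lambda>p. app n k (fst p) (snd p)) -` Pi\<^sub>E {..<n+k} A \<inter> space (PX lam n \<Otimes>\<^sub>M PX lam k)"
        using xy by (simp add: space_pair_measure)
    qed
    have "emeasure (distr (PX lam n \<Otimes>\<^sub>M PX lam k) (PiM {..<n+k} (\<lambda>_. lam)) (\<lambda>p. app n k (fst p) (snd p))) (Pi\<^sub>E {..<n+k} A)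
      = emeasure (PX lam n \<Otimes>\<^sub>M PX lam k) (Pi\<^sub>E {..<n} A \<times> Pi\<^sub>E {..<k} (\<lambda>i. A (n+i)))"
      apply (subst emeasure_distr)
      using app_meas[of n k lam] A * by (auto simp: PX_def intro!: sets_PiM_I_finite)
    also have "\<dots> = (\<Prod>i<n. emeasure lam (A i)) * (\<Prod>i<k. emeasure lam (A (n+i)))"
    proof -
      have e1: "emeasure (PX lam n) (Pi\<^sub>E {..<n} A) = (\<Prod>i<n. emeasure lam (A i))"
        unfolding PX_def using A by (subst P.emeasure_PiM) (auto simp del: PiE_eq_empty_iff)
      have e2: "emeasure (PX lam k) (Pi\<^sub>E {..<k} (\<lambda>i. A (n+i))) = (\<Prod>i<k. emeasure lam (A (n+i)))"
        unfolding PX_def using A by (subst P.emeasure_PiM) (auto simp del: PiE_eq_empty_iff)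
      have s1: "Pi\<^sub>E {..<n} A \<in> sets (PX lam n)" unfolding PX_def using A by (intro sets_PiM_I_finite) auto
      have s2: "Pi\<^sub>E {..<k} (\<lambda>i. A (n+i)) \<in> sets (PX lam k)" unfolding PX_def using A by (intro sets_PiM_I_finite) auto
      show ?thesis by (simp only: J.emeasure_pair_measure_Times[OF s1 s2] e1 e2)
    qed
    also have "\<dots> = (\<Prod>i\<in>{..<n+k}. emeasure lam (A i))"
      by (rule prod_lessThan_add[symmetric])
    finally show "emeasure (distr (PX lam n \<Otimes>\<^sub>M PX lam k) (PiM {..<n+k} (\<lambda>_. lam)) (\<lambda>p. app n k (fst p) (snd p))) (Pi\<^sub>E {..<n+k} A) = (\<Prod>i\<in>{..<n+k}. emeasure lam (A i))" .
  qed (simp, simp only: sets_distr)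
qed



lemma AE_fubini:
  assumes sf: "sigma_finite_measure lam" and ae: "AE u in PX lam (n+k). P u"
  shows "AE x in PX lam n. AE y in PX lam k. P (app n k x y)"
proof -
  interpret I: sigma_finite_measure "PX lam n" using sf_PX[OF sf] .
  interpret J: sigma_finite_measure "PX lam k" using sf_PX[OF sf] .
  interpret pair_sigma_finite "PX lam n" "PX lam k" ..
  have "AE p in PX lam n \<Otimes>\<^sub>M PX lam k. P (app n k (fst p) (snd p))"
    by (rule AE_distrD[OF app_meas]) (unfold distr_app[OF sf], rule ae)
  from AE_pair[OF this] show ?thesis by simp
qed

lemma r1_meas: "(\<lambda>x. \<lambda>i\<in>{..<n}. x i) \<in> measurable (PX lam (n+k)) (PX lam n)"
  unfolding PX_def by (rule measurable_restrict) simp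

lemma r2_meas: "(\<lambda>x. \<lambda>i\<in>{..<k}. x (n+i)) \<in> measurable (PX lam (n+k)) (PX lam k)"
  unfolding PX_def by (rule measurable_restrict) simp

lemma r1_app: "x \<in> space (PX lam n) \<Longrightarrow> (\<lambda>i\<in>{..<n}. app n k x y i) = x"
  by (auto simp: app_def PX_def space_PiM PiE_iff extensional_def fun_eq_iff)

lemma r2_app: "y \<in> space (PX lam k) \<Longrightarrow> (\<lambda>i\<in>{..<k}. app n k x y (n+i)) = y"
  by (auto simp: app_def PX_def space_PiM PiE_iff extensional_def fun_eq_iff)

lemma AE_split:
  assumes sf: "sigma_finite_measure lam"
    and P: "AE u in PX lam n. P u" and Q: "AE w in PX lam k. Q w"
  shows "AE x in PX lam (n+k). P (\<lambda>i\<in>{..<n}. x i) \<and> Q (\<lambda>i\<in>{..<k}. x (n+i))"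
proof -
  interpret I: sigma_finite_measure "PX lam n" using sf_PX[OF sf] .
  interpret J: sigma_finite_measure "PX lam k" using sf_PX[OF sf] .
  interpret pair_sigma_finite "PX lam n" "PX lam k" ..
  from P obtain N0 where N0: "{x \<in> space (PX lam n). \<not> P x} \<subseteq> N0" "emeasure (PX lam n) N0 = 0" "N0 \<in> sets (PX lam n)"
    by (rule AE_E)
  from Q obtain N1 where N1: "{x \<in> space (PX lam k). \<not> Q x} \<subseteq> N1" "emeasure (PX lam k) N1 = 0" "N1 \<in> sets (PX lam k)"
    by (rule AE_E)
  let ?R = "\<lambda>x. (\<lambda>i\<in>{..<n}. x i) \<notin> N0 \<and> (\<lambda>i\<in>{..<k}. x (n+i)) \<notin> N1"
  have Rs: "{x \<in> space (PX lam (n+k)). ?R x} \<in> sets (PX lam (n+k))"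
  proof -
    have "{x \<in> space (PX lam (n+k)). ?R x} = space (PX lam (n+k)) -
       (((\<lambda>x. \<lambda>i\<in>{..<n}. x i) -` N0 \<inter> space (PX lam (n+k))) \<union> ((\<lambda>x. \<lambda>i\<in>{..<k}. x (n+i)) -` N1 \<inter> space (PX lam (n+k))))"
      by auto
    also have "\<dots> \<in> sets (PX lam (n+k))"
      using measurable_sets[OF r1_meas N0(3)] measurable_sets[OF r2_meas N1(3)] by blast
    finally show ?thesis .
  qed
  have "AE x in PX lam n. AE y in PX lam k. x \<notin> N0 \<and> y \<notin> N1"
  proof -
    have "AE x in PX lam n. x \<notin> N0" using N0 by (intro AE_not_in) auto
    moreover have "AE y in PX lam k. y \<notin> N1" using N1 by (intro AE_not_in) auto
    ultimately show ?thesis by (auto elim: AE_mp)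
  qed
  then have "AE x in PX lam n. AE y in PX lam k. ?R (app n k x y)"
    apply (rule AE_mp)
    apply (rule AE_I2)
    apply (rule impI)
    apply (erule AE_mp)
    apply (rule AE_I2)
    apply (simp add: r1_app r2_app)
    done
  then have "AE p in PX lam n \<Otimes>\<^sub>M PX lam k. ?R (app n k (fst p) (snd p))"
  proof (intro AE_pair_measure)
    have "{p \<in> space (PX lam n \<Otimes>\<^sub>M PX lam k). ?R (app n k (fst p) (snd p))}
       = (\<lambda>p. app n k (fst p) (snd p)) -` {x \<in> space (PX lam (n+k)). ?R x} \<inter> space (PX lam n \<Otimes>\<^sub>M PX lam k)"
      using measurable_space[OF app_meas] by blast
    then show "{p \<in> space (PX lam n \<Otimes>\<^sub>M PX lam k). ?R (app n k (fst p) (snd p))} \<in> sets (PX lam n \<Otimes>\<^sub>M PX lam k)"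
      using measurable_sets[OF app_meas Rs] by simp
  qed simp
  then have "AE x in distr (PX lam n \<Otimes>\<^sub>M PX lam k) (PX lam (n+k)) (\<lambda>p. app n k (fst p) (snd p)). ?R x"
    by (subst AE_distr_iff[OF app_meas Rs])
  then have "AE x in PX lam (n+k). ?R x" unfolding distr_app[OF sf] .
  then show ?thesis
  proof (rule AE_mp, intro AE_I2 impI conjI)
    fix x assume x: "x \<in> space (PX lam (n+k))" and R: "?R x"
    have "(\<lambda>i\<in>{..<n}. x i) \<in> space (PX lam n)" using measurable_space[OF r1_meas x] .
    then show "P (\<lambda>i\<in>{..<n}. x i)" using R N0(1) by blast
    have "(\<lambda>i\<in>{..<k}. x (n+i)) \<in> space (PX lam k)" using measurable_space[OF r2_meas x] .
    then show "Q (\<lambda>i\<in>{..<k}. x (n+i))" using R N1(1) by blast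
  qed
qed



lemma mayer_le0: "mayer v x y \<le> 0"
  by (auto simp: mayer_def)

lemma mayer_ge: "-1 \<le> mayer v x y"
  by (auto simp: mayer_def)

lemma one_mayer_nonneg: "0 \<le> 1 + mayer v x y"
  using mayer_ge[of v x y] by simp

lemma one_mayer_le1: "1 + mayer v x y \<le> 1"
  using mayer_le0[of v x y] by simp

lemma abs_mayer: "\<bar>mayer v x y\<bar> = - mayer v x y"
  using mayer_le0[of v x y] by simp

definition gk :: "('a \<Rightarrow> 'a \<Rightarrow> ennreal) \<Rightarrow> ('a \<Rightarrow> real) \<Rightarrow> ('a \<Rightarrow> real) \<Rightarrow> nat \<Rightarrow> 'a \<Rightarrow> (nat \<Rightarrow> 'a) \<Rightarrow> real" where
  "gk v z a k x0 y = (\<Prod>j<k. \<bar>mayer v x0 (y j)\<bar>) *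
                 (\<Prod>j<k. \<Prod>i<j. 1 + mayer v (y i) (y j)) *
                 (\<Prod>j<k. z (y j) * exp (a (y j)))"

lemma gk_nonneg: "(\<And>x. 0 \<le> z x) \<Longrightarrow> 0 \<le> gk v z a k x0 y"
  unfolding gk_def
  by (intro mult_nonneg_nonneg prod_nonneg) (auto intro: one_mayer_nonneg)

lemma weight_nonneg: "(\<And>x. 0 \<le> z x) \<Longrightarrow> 0 \<le> weight v z a t n x"
  unfolding weight_def
  by (intro mult_nonneg_nonneg prod_nonneg) (auto intro: one_mayer_nonneg)

lemma weight_cong: "(\<And>i. i < n \<Longrightarrow> x i = y i) \<Longrightarrow> weight v z a t n x = weight v z a t n y"
  unfolding weight_def by (intro arg_cong2[where f="(*)"] arg_cong2[where f="(*)"] refl prod.cong) auto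

lemma weight_split:
  assumes z: "\<And>x. 0 \<le> z x"
  shows "weight v z a t (n+k) (app n k x y) \<le> weight v z a t n x *
     (exp (t * real k) * (\<Prod>j<k. \<Prod>i<j. 1 + mayer v (y i) (y j)) * (\<Prod>j<k. z (y j) * exp (a (y j))))"
proof -
  let ?h = "\<lambda>u w. 1 + mayer v u w"
  let ?u = "app n k x y"
  define PX where "PX = (\<Prod>j<n. \<Prod>i<j. ?h (x i) (x j))"
  define PY where "PY = (\<Prod>j<k. \<Prod>i<j. ?h (y i) (y j))"
  define CR where "CR = (\<Prod>j<k. \<Prod>i<n + j. ?h (?u i) (y j))"
  define ZX where "ZX = (\<Prod>i<n. z (x i) * exp (a (x i)))"
  define ZY where "ZY = (\<Prod>j<k. z (y j) * exp (a (y j)))"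
  have u1: "?u i = x i" if "i < n" for i using that by (simp add: app_def)
  have u2: "?u (n+j) = y j" if "j < k" for j using that by (simp add: app_def)
  have Z: "(\<Prod>i<n+k. z (?u i) * exp (a (?u i))) = ZX * ZY"
    unfolding prod_lessThan_add ZX_def ZY_def
    by (intro arg_cong2[where f="(*)"] prod.cong) (auto simp: u1 u2)
  have P: "(\<Prod>j<n+k. \<Prod>i<j. ?h (?u i) (?u j)) = PX * CR"
    unfolding prod_lessThan_add PX_def CR_def
    by (intro arg_cong2[where f="(*)"] prod.cong) (auto simp: u1 u2)
  have CR: "CR \<le> PY"
    unfolding CR_def PY_def
  proof (rule prod_mono, rule conjI)
    fix j assume j: "j \<in> {..<k}"
    have e: "(\<Prod>i<n + j. ?h (?u i) (y j)) = (\<Prod>i<n. ?h (x i) (y j)) * (\<Prod>i<j. ?h (y i) (y j))"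
      unfolding prod_lessThan_add using j by (intro arg_cong2[where f="(*)"] prod.cong) (auto simp: u1 u2)
    have a: "(\<Prod>i<n. ?h (x i) (y j)) \<le> 1"
      by (rule prod_le_1) (auto intro: one_mayer_nonneg mayer_le0)
    have b: "0 \<le> (\<Prod>i<j. ?h (y i) (y j))" by (rule prod_nonneg) (auto intro: one_mayer_nonneg)
    show "0 \<le> (\<Prod>i<n + j. ?h (?u i) (y j))" by (rule prod_nonneg) (auto intro: one_mayer_nonneg)
    show "(\<Prod>i<n + j. ?h (?u i) (y j)) \<le> (\<Prod>i<j. ?h (y i) (y j))"
      unfolding e using mult_right_mono[OF a b] by simp
  qed
  have nn: "0 \<le> PX" "0 \<le> ZX" "0 \<le> ZY" "0 \<le> CR"
    unfolding PX_def ZX_def ZY_def CR_def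
    by (auto intro!: prod_nonneg mult_nonneg_nonneg intro: one_mayer_nonneg z)
  have "weight v z a t (n+k) ?u = exp (t * real n) * exp (t * real k) * (PX * CR) * (ZX * ZY)"
    unfolding weight_def Z P by (simp add: distrib_left exp_add)
  also have "\<dots> \<le> exp (t * real n) * exp (t * real k) * (PX * PY) * (ZX * ZY)"
    using CR nn by (intro mult_right_mono mult_left_mono) (auto intro: mult_nonneg_nonneg)
  also have "\<dots> = weight v z a t n x * (exp (t * real k) * PY * ZY)"
    unfolding weight_def PX_def ZX_def by (simp add: ac_simps)
  finally show ?thesis unfolding PY_def ZY_def .
qed

lemma weight_Suc:
  "weight v z a t (Suc n) x = exp t * (z (x 0) * exp (a (x 0))) * (\<Prod>i\<in>{1..n}. 1 + mayer v (x 0) (x i))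
     * weight v z a t n (\<lambda>i. x (Suc i))"
proof -
  have e1: "(\<Prod>i\<in>{1..n}. 1 + mayer v (x 0) (x i)) = (\<Prod>j<n. 1 + mayer v (x 0) (x (Suc j)))"
    by (rule prod.reindex_bij_witness[where i="\<lambda>j. Suc j" and j="\<lambda>i. i - 1"]) auto
  have e2: "(\<Prod>j<Suc n. \<Prod>i<j. 1 + mayer v (x i) (x j)) =
      (\<Prod>j<n. 1 + mayer v (x 0) (x (Suc j))) * (\<Prod>j<n. \<Prod>i<j. 1 + mayer v (x (Suc i)) (x (Suc j)))"
    unfolding prod.lessThan_Suc_shift by (simp add: prod.distrib del: prod.lessThan_Suc)
  have e3: "(\<Prod>i<Suc n. z (x i) * exp (a (x i))) = z (x 0) * exp (a (x 0)) * (\<Prod>i<n. z (x (Suc i)) * exp (a (x (Suc i))))"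
    unfolding prod.lessThan_Suc_shift by (simp del: prod.lessThan_Suc)
  show ?thesis unfolding weight_def e1 e2 e3
    by (simp add: exp_add[symmetric] distrib_left ac_simps)
qed

lemma Kint_eq:
  "Kint v \<rho> n x k y = (\<Prod>j<k. mayer v (x 0) (y j)) * \<rho> (n + k) (app n k (\<lambda>i\<in>{..<n}. x (Suc i)) y)"
proof -
  have "(\<lambda>i\<in>{..<n + k}. if i < n then x (Suc i) else y (i - n)) = app n k (\<lambda>i\<in>{..<n}. x (Suc i)) y"
    by (auto simp: app_def fun_eq_iff)
  then show ?thesis unfolding Kint_def by simp
qed

lemma Kint_bound:
  assumes z: "\<And>x. 0 \<le> z x" and C: "0 \<le> C"
    and b: "\<bar>\<rho> (n+k) (app n k (\<lambda>i\<in>{..<n}. x (Suc i)) y)\<bar> \<le> C * weight v z a t (n+k) (app n k (\<lambda>i\<in>{..<n}. x (Suc i)) y)"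
  shows "\<bar>Kint v \<rho> n x k y\<bar> \<le> C * weight v z a t n (\<lambda>i\<in>{..<n}. x (Suc i)) * (exp (t * real k) * gk v z a k (x 0) y)"
proof -
  let ?x' = "\<lambda>i\<in>{..<n}. x (Suc i)"
  define F where "F = (\<Prod>j<k. \<bar>mayer v (x 0) (y j)\<bar>)"
  have F: "0 \<le> F" unfolding F_def by (rule prod_nonneg) auto
  have "\<bar>Kint v \<rho> n x k y\<bar> = F * \<bar>\<rho> (n+k) (app n k ?x' y)\<bar>"
    unfolding Kint_eq F_def by (simp add: abs_mult abs_prod)
  also have "\<dots> \<le> F * (C * weight v z a t (n+k) (app n k ?x' y))"
    using b F by (rule mult_left_mono)
  also have "\<dots> \<le> F * (C * (weight v z a t n ?x' *
     (exp (t * real k) * (\<Prod>j<k. \<Prod>i<j. 1 + mayer v (y i) (y j)) * (\<Prod>j<k. z (y j) * exp (a (y j))))))"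
    using weight_split[OF z, where v=v and a=a and t=t and n=n and k=k and x="?x'" and y=y] F C by (intro mult_left_mono) auto
  also have "\<dots> = C * weight v z a t n ?x' * (exp (t * real k) * gk v z a k (x 0) y)"
    unfolding gk_def F_def by (simp add: ac_simps)
  finally show ?thesis .
qed



locale setting =
  fixes lam :: "('a::polish_space) measure"
    and v :: "'a \<Rightarrow> 'a \<Rightarrow> ennreal"
    and z a :: "'a \<Rightarrow> real"
    and t :: real
  assumes sets_lam: "sets lam = sets borel"
    and lam_fin: "\<And>B. B \<in> sets borel \<Longrightarrow> bounded B \<Longrightarrow> emeasure lam B < \<infinity>"
    and v_meas: "case_prod v \<in> borel_measurable (lam \<Otimes>\<^sub>M lam)"
    and z_meas: "z \<in> borel_measurable lam"
    and z_nonneg: "\<And>x. 0 \<le> z x"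
    and a_meas: "a \<in> borel_measurable lam"
    and a_nonneg: "\<And>x. 0 \<le> a x"
    and t_pos: "0 < t"
begin

lemma sf: "sigma_finite_measure lam"
  by (rule sf_lam[OF sets_lam lam_fin])

lemma mayer_meas: "(\<lambda>p. mayer v (fst p) (snd p)) \<in> borel_measurable (lam \<Otimes>\<^sub>M lam)"
proof -
  have [measurable]: "(\<lambda>p. v (fst p) (snd p)) \<in> borel_measurable (lam \<Otimes>\<^sub>M lam)"
    using v_meas by (simp add: case_prod_beta')
  show ?thesis unfolding mayer_def by measurable
qed

lemma mayer_meas2:
  assumes "X \<in> measurable N lam" "Y \<in> measurable N lam"
  shows "(\<lambda>w. mayer v (X w) (Y w)) \<in> borel_measurable N"
  using measurable_compose[OF measurable_Pair[OF assms] mayer_meas] by simp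

lemma z_meas2: "X \<in> measurable N lam \<Longrightarrow> (\<lambda>w. z (X w)) \<in> borel_measurable N"
  using measurable_compose[OF _ z_meas] by blast

lemma a_meas2: "X \<in> measurable N lam \<Longrightarrow> (\<lambda>w. a (X w)) \<in> borel_measurable N"
  using measurable_compose[OF _ a_meas] by blast

lemma expa_meas2: "X \<in> measurable N lam \<Longrightarrow> (\<lambda>w. exp (a (X w))) \<in> borel_measurable N"
  by (rule measurable_compose[OF a_meas2 borel_measurable_exp, unfolded comp_def])

lemma comp_meas: "i < n \<Longrightarrow> (\<lambda>x. x i) \<in> measurable (PX lam n) lam"
  unfolding PX_def by simp

lemma tl_meas: "(\<lambda>x. \<lambda>i\<in>{..<n}. x (Suc i)) \<in> measurable (PX lam (Suc n)) (PX lam n)"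
  unfolding PX_def by (rule measurable_restrict) simp

lemma Kint_meas:
  assumes rho: "\<rho> (n+k) \<in> borel_measurable (PX lam (n+k))"
  shows "(\<lambda>p. Kint v \<rho> n (fst p) k (snd p)) \<in> borel_measurable (PX lam (Suc n) \<Otimes>\<^sub>M PX lam k)"
proof -
  have h: "(\<lambda>p. fst p 0) \<in> measurable (PX lam (Suc n) \<Otimes>\<^sub>M PX lam k) lam"
    using measurable_compose[OF measurable_fst comp_meas[of 0 "Suc n"]] by simp
  have y: "j < k \<Longrightarrow> (\<lambda>p. snd p j) \<in> measurable (PX lam (Suc n) \<Otimes>\<^sub>M PX lam k) lam" for j
    using measurable_compose[OF measurable_snd comp_meas[of j k]] by simp
  have f: "(\<lambda>p. \<Prod>j<k. mayer v (fst p 0) (snd p j)) \<in> borel_measurable (PX lam (Suc n) \<Otimes>\<^sub>M PX lam k)"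
    by (rule borel_measurable_prod) (auto intro!: mayer_meas2 h y)
  have m: "(\<lambda>p. (\<lambda>i\<in>{..<n}. fst p (Suc i), snd p)) \<in> measurable (PX lam (Suc n) \<Otimes>\<^sub>M PX lam k) (PX lam n \<Otimes>\<^sub>M PX lam k)"
    by (intro measurable_Pair measurable_compose[OF measurable_fst tl_meas] measurable_snd)
  have r: "(\<lambda>p. \<rho> (n + k) (app n k (\<lambda>i\<in>{..<n}. fst p (Suc i)) (snd p))) \<in> borel_measurable (PX lam (Suc n) \<Otimes>\<^sub>M PX lam k)"
    using measurable_compose[OF measurable_compose[OF m app_meas] rho] by simp
  show ?thesis unfolding Kint_eq using f r by (rule borel_measurable_times)
qed

lemma Kint_meas_y:
  assumes rho: "\<rho> (n+k) \<in> borel_measurable (PX lam (n+k))" and x: "x \<in> space (PX lam (Suc n))"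
  shows "Kint v \<rho> n x k \<in> borel_measurable (PX lam k)"
  using measurable_Pair2[OF Kint_meas[where \<rho>=\<rho> and n=n and k=k, OF rho] x] by simp

lemma gk_meas: "gk v z a k x0 \<in> borel_measurable (PX lam k)"
proof -
  have c: "(\<lambda>y. x0) \<in> measurable (PX lam k) lam" by (simp add: measurable_const sets_eq_imp_space_eq[OF sets_lam])
  show ?thesis unfolding gk_def
    by (intro borel_measurable_times borel_measurable_prod borel_measurable_abs mayer_meas2 c comp_meas
          borel_measurable_add borel_measurable_const z_meas2 expa_meas2) auto
qed

lemma Kop_meas:
  assumes rho: "\<And>m. m \<ge> 1 \<Longrightarrow> \<rho> m \<in> borel_measurable (PX lam m)"
  shows "Kop lam v z \<rho> (Suc n) \<in> borel_measurable (PX lam (Suc n))"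
proof -
  have I: "(\<lambda>x. \<integral>y. Kint v \<rho> n x (Suc k) y \<partial>PX lam (Suc k)) \<in> borel_measurable (PX lam (Suc n))" for k
  proof -
    interpret S: sigma_finite_measure "PX lam (Suc k)" by (rule sf_PX[OF sf])
    show ?thesis
      by (rule S.borel_measurable_lebesgue_integral)
         (use Kint_meas[of \<rho> n "Suc k"] rho in \<open>simp add: case_prod_beta'\<close>)
  qed
  have S: "(\<lambda>x. \<Sum>k. (\<integral>y. Kint v \<rho> n x (Suc k) y \<partial>PX lam (Suc k)) / fact (Suc k)) \<in> borel_measurable (PX lam (Suc n))"
    by (intro borel_measurable_suminf borel_measurable_divide I borel_measurable_const)
  have R: "(\<lambda>x. if n = 0 then 0 else \<rho> n (\<lambda>i\<in>{..<n}. x (Suc i))) \<in> borel_measurable (PX lam (Suc n))"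
  proof (cases "n = 0")
    case False
    then show ?thesis using measurable_compose[OF tl_meas rho[of n]] by simp
  qed simp
  have P: "(\<lambda>x. \<Prod>i\<in>{1..n}. 1 + mayer v (x 0) (x i)) \<in> borel_measurable (PX lam (Suc n))"
    by (intro borel_measurable_prod borel_measurable_add borel_measurable_const mayer_meas2 comp_meas) auto
  have Z: "(\<lambda>x. z (x 0)) \<in> borel_measurable (PX lam (Suc n))"
    by (intro z_meas2 comp_meas) simp
  show ?thesis
    unfolding Kop_def[abs_def] using Z P R S by simp
qed

end


context setting begin

lemma pointwise:
  fixes \<rho> :: "nat \<Rightarrow> (nat \<Rightarrow> 'a) \<Rightarrow> real"
  assumes rho: "\<And>m. m \<ge> 1 \<Longrightarrow> \<rho> m \<in> borel_measurable (PX lam m)"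
    and C: "0 \<le> C"
    and x: "x \<in> space (PX lam (Suc n))"
    and H1: "n \<ge> 1 \<Longrightarrow> \<bar>\<rho> n (\<lambda>i\<in>{..<n}. x (Suc i))\<bar> \<le> C * weight v z a t n (\<lambda>i\<in>{..<n}. x (Suc i))"
    and H2: "\<And>k. AE y in PX lam (Suc k). \<bar>\<rho> (n + Suc k) (app n (Suc k) (\<lambda>i\<in>{..<n}. x (Suc i)) y)\<bar>
               \<le> C * weight v z a t (n + Suc k) (app n (Suc k) (\<lambda>i\<in>{..<n}. x (Suc i)) y)"
    and H3: "(\<Sum>k. ennreal (exp (t * real (Suc k)) / fact (Suc k)) *
               (\<integral>\<^sup>+y. ennreal (gk v z a (Suc k) (x 0) y) \<partial>PX lam (Suc k))) \<le> ennreal (exp (a (x 0)) - 1)"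
  shows "(\<forall>k. integrable (PX lam (Suc k)) (Kint v \<rho> n x (Suc k))) \<and>
         summable (\<lambda>k. (\<integral>y. \<bar>Kint v \<rho> n x (Suc k) y\<bar> \<partial>PX lam (Suc k)) / fact (Suc k)) \<and>
         \<bar>Kop lam v z \<rho> (Suc n) x\<bar> \<le> exp (- t) * C * weight v z a t (Suc n) x"
proof -
  let ?x' = "\<lambda>i\<in>{..<n}. x (Suc i)"
  let ?x0 = "x 0"
  define Wx where "Wx = weight v z a t n ?x'"
  have Wx: "0 \<le> Wx" unfolding Wx_def by (rule weight_nonneg[OF z_nonneg])
  define c where "c k = exp (t * real (Suc k)) / fact (Suc k)" for k
  have c: "0 < c k" for k unfolding c_def by simp
  define G where "G k = (\<integral>\<^sup>+y. ennreal (gk v z a (Suc k) ?x0 y) \<partial>PX lam (Suc k))" for k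
  have ea: "0 \<le> exp (a ?x0) - 1" using a_nonneg[of ?x0] by simp
  have Gfin: "G k < \<infinity>" for k
  proof -
    have "ennreal (c k) * G k \<le> (\<Sum>k. ennreal (c k) * G k)"
      using sum_le_suminf[OF summableI, of "{k}" "\<lambda>k. ennreal (c k) * G k"] by simp
    also have "\<dots> \<le> ennreal (exp (a ?x0) - 1)" using H3 unfolding c_def G_def .
    also have "\<dots> < \<infinity>" by simp
    finally have "ennreal (c k) * G k \<noteq> \<infinity>" by simp
    then show ?thesis using c[of k] by (simp add: ennreal_mult_eq_top_iff less_top)
  qed
  have gint: "integrable (PX lam (Suc k)) (gk v z a (Suc k) ?x0)" for k
    using Gfin[of k] unfolding G_def
    by (intro integrableI_nonneg gk_meas AE_I2 gk_nonneg z_nonneg) auto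
  define Gr where "Gr k = (\<integral>y. gk v z a (Suc k) ?x0 y \<partial>PX lam (Suc k))" for k
  have Gr: "0 \<le> Gr k" for k unfolding Gr_def by (intro integral_nonneg_AE AE_I2 gk_nonneg z_nonneg)
  have GGr: "G k = ennreal (Gr k)" for k
    unfolding G_def Gr_def by (intro nn_integral_eq_integral gint AE_I2 gk_nonneg z_nonneg)
  define b where "b k = c k * Gr k" for k
  have b: "0 \<le> b k" for k unfolding b_def using c[of k] Gr[of k] by simp
  have bsum: "(\<Sum>k. ennreal (b k)) \<le> ennreal (exp (a ?x0) - 1)"
    using H3 unfolding b_def c_def[symmetric] G_def[symmetric] GGr
    by (simp add: ennreal_mult c less_imp_le Gr)
  have bsumm: "summable b"
    by (rule summable_suminf_not_top[OF b]) (use bsum in \<open>auto simp: top_unique\<close>)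
  have ble: "suminf b \<le> exp (a ?x0) - 1"
    using bsum unfolding suminf_ennreal2[OF b bsumm] using ea by simp
  define F where "F k y = C * Wx * (exp (t * real (Suc k)) * gk v z a (Suc k) ?x0 y)" for k y
  have Fint: "integrable (PX lam (Suc k)) (F k)" for k
    unfolding F_def by (intro integrable_mult_right gint)
  have Fnn: "0 \<le> F k y" for k y
    unfolding F_def using C Wx by (intro mult_nonneg_nonneg gk_nonneg z_nonneg) auto
  have KB: "AE y in PX lam (Suc k). \<bar>Kint v \<rho> n x (Suc k) y\<bar> \<le> F k y" for k
    using H2[of k] by eventually_elim (unfold F_def Wx_def, rule Kint_bound[OF z_nonneg C])
  have Kmeas: "Kint v \<rho> n x (Suc k) \<in> borel_measurable (PX lam (Suc k))" for k
    by (rule Kint_meas_y[where \<rho>=\<rho> and n=n and k="Suc k", OF rho[of "n + Suc k"] x]) simp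
  have Kint: "integrable (PX lam (Suc k)) (Kint v \<rho> n x (Suc k))" for k
    by (rule Bochner_Integration.integrable_bound[OF Fint[of k] Kmeas]) (use KB[of k] Fnn in \<open>auto\<close>)
  define T where "T k = (\<integral>y. \<bar>Kint v \<rho> n x (Suc k) y\<bar> \<partial>PX lam (Suc k))" for k
  have T: "T k \<le> C * Wx * fact (Suc k) * b k" for k
  proof -
    have "T k \<le> (\<integral>y. F k y \<partial>PX lam (Suc k))"
      unfolding T_def by (rule integral_mono_AE'[OF Fint KB]) (simp add: Fnn)
    also have "\<dots> = C * Wx * (exp (t * real (Suc k)) * Gr k)"
      unfolding F_def Gr_def by simp
    also have "\<dots> = C * Wx * fact (Suc k) * b k"
      unfolding b_def c_def by simp
    finally show ?thesis .
  qed
  have T0: "0 \<le> T k" for k unfolding T_def by simp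
  have Tsumm: "summable (\<lambda>k. T k / fact (Suc k))"
  proof (rule summable_comparison_test'[where N=0])
    show "summable (\<lambda>k. C * Wx * b k)" by (intro summable_mult bsumm)
    show "norm (T k / fact (Suc k)) \<le> C * Wx * b k" for k
      using T[of k] T0[of k] by (simp add: divide_simps ac_simps)
  qed
  have Tsum: "(\<Sum>k. T k / fact (Suc k)) \<le> C * Wx * (exp (a ?x0) - 1)"
  proof -
    have "(\<Sum>k. T k / fact (Suc k)) \<le> (\<Sum>k. C * Wx * b k)"
      by (rule suminf_le[OF _ Tsumm summable_mult[OF bsumm]]) (use T T0 in \<open>simp add: divide_simps ac_simps\<close>)
    also have "\<dots> = C * Wx * suminf b" by (rule suminf_mult[OF bsumm])
    also have "\<dots> \<le> C * Wx * (exp (a ?x0) - 1)" using ble C Wx by (intro mult_left_mono) auto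
    finally show ?thesis .
  qed
  define I where "I k = (\<integral>y. Kint v \<rho> n x (Suc k) y \<partial>PX lam (Suc k)) / fact (Suc k)" for k
  have IT: "\<bar>I k\<bar> \<le> T k / fact (Suc k)" for k
    unfolding I_def T_def by (simp add: divide_right_mono)
  have Iabs: "summable (\<lambda>k. \<bar>I k\<bar>)"
    by (rule summable_comparison_test'[OF Tsumm]) (use IT in simp)
  have Ssum: "\<bar>\<Sum>k. I k\<bar> \<le> C * Wx * (exp (a ?x0) - 1)"
  proof -
    have "\<bar>\<Sum>k. I k\<bar> \<le> (\<Sum>k. \<bar>I k\<bar>)" by (rule summable_rabs[OF Iabs])
    also have "\<dots> \<le> (\<Sum>k. T k / fact (Suc k))" by (rule suminf_le[OF IT Iabs Tsumm])
    also have "\<dots> \<le> C * Wx * (exp (a ?x0) - 1)" by (rule Tsum)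
    finally show ?thesis .
  qed
  define A where "A = (if n = 0 then 0 else \<rho> n ?x')"
  have A: "\<bar>A\<bar> \<le> C * Wx"
    unfolding A_def using H1 C Wx unfolding Wx_def by (auto intro: mult_nonneg_nonneg)
  define P where "P = (\<Prod>i\<in>{1..n}. 1 + mayer v ?x0 (x i))"
  have P: "0 \<le> P" unfolding P_def by (intro prod_nonneg) (auto intro: one_mayer_nonneg)
  have Kop: "Kop lam v z \<rho> (Suc n) x = z ?x0 * P * (A + (\<Sum>k. I k))"
    unfolding Kop_def P_def A_def I_def by simp
  have "\<bar>Kop lam v z \<rho> (Suc n) x\<bar> = z ?x0 * P * \<bar>A + (\<Sum>k. I k)\<bar>"
    unfolding Kop using z_nonneg[of ?x0] P by (simp add: abs_mult)
  also have "\<dots> \<le> z ?x0 * P * (C * Wx + C * Wx * (exp (a ?x0) - 1))"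
    using A Ssum z_nonneg[of ?x0] P by (intro mult_left_mono) (auto intro: abs_triangle_ineq[THEN order_trans])
  also have "\<dots> = exp (- t) * C * weight v z a t (Suc n) x"
  proof -
    have "weight v z a t n (\<lambda>i. x (Suc i)) = Wx" unfolding Wx_def by (rule weight_cong) simp
    then show ?thesis unfolding weight_Suc P_def
      by (simp add: algebra_simps exp_minus field_simps)
  qed
  finally show ?thesis using Kint Tsumm unfolding T_def by blast
qed

end


lemma AE_PX1:
  assumes sf: "sigma_finite_measure lam" and Q: "AE x in lam. Q x"
  shows "AE u in PX lam 1. Q (u 0)"
proof -
  from Q obtain N where N: "{x \<in> space lam. \<not> Q x} \<subseteq> N" "emeasure lam N = 0" "N \<in> sets lam"
    by (rule AE_E)
  let ?N = "Pi\<^sub>E {..<1::nat} (\<lambda>_. N)"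
  have s: "?N \<in> sets (PX lam 1)" unfolding PX_def using N(3) by (intro sets_PiM_I_finite) auto
  have e: "emeasure (PX lam 1) ?N = 0"
  proof -
    have "emeasure (PX lam 1) ?N = emeasure (PiM {0::nat} (\<lambda>_. lam)) (Pi\<^sub>E {0} (\<lambda>_. N))"
      unfolding PX_def by (simp add: lessThan_Suc)
    also have "\<dots> = emeasure lam N"
      by (subst product_sigma_finite.emeasure_PiM[OF psf[OF sf]]) (use N(3) in auto)
    finally show ?thesis using N(2) by simp
  qed
  show ?thesis
  proof (rule AE_I'[of ?N])
    show "?N \<in> null_sets (PX lam 1)" using s e by auto
    show "{u \<in> space (PX lam 1). \<not> Q (u 0)} \<subseteq> ?N"
    proof
      fix u assume u: "u \<in> {u \<in> space (PX lam 1). \<not> Q (u 0)}"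
      then have "u 0 \<in> space lam" "u \<in> extensional {..<1}"
        by (auto simp: PX_def space_PiM PiE_iff)
      with u N(1) have "u 0 \<in> N" by auto
      then show "u \<in> ?N" using \<open>u \<in> extensional {..<1}\<close> by (auto simp: PiE_iff)
    qed
  qed
qed

context setting begin

lemma main_rho:
  fixes \<rho> :: "nat \<Rightarrow> (nat \<Rightarrow> 'a) \<Rightarrow> real"
  assumes rho: "\<And>m. m \<ge> 1 \<Longrightarrow> \<rho> m \<in> borel_measurable (PX lam m)"
    and C: "0 \<le> C"
    and hb: "\<And>m. m \<ge> 1 \<Longrightarrow> AE x in PX lam m. \<bar>\<rho> m x\<bar> \<le> C * weight v z a t m x"
    and KP: "AE x0 in lam.
      (\<Sum>k. ennreal (exp (t * real (Suc k)) / fact (Suc k)) *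
        (\<integral>\<^sup>+y. ennreal ((\<Prod>j<Suc k. \<bar>mayer v x0 (y j)\<bar>) *
                 (\<Prod>j<Suc k. \<Prod>i<j. 1 + mayer v (y i) (y j)) *
                 (\<Prod>j<Suc k. z (y j) * exp (a (y j)))) \<partial>PX lam (Suc k)))
      \<le> ennreal (exp (a x0) - 1)"
  shows "AE x in PX lam (Suc n). (\<forall>k. integrable (PX lam (Suc k)) (Kint v \<rho> n x (Suc k))) \<and>
         summable (\<lambda>k. (\<integral>y. \<bar>Kint v \<rho> n x (Suc k) y\<bar> \<partial>PX lam (Suc k)) / fact (Suc k)) \<and>
         \<bar>Kop lam v z \<rho> (Suc n) x\<bar> \<le> exp (- t) * C * weight v z a t (Suc n) x"
proof -
  let ?Q = "\<lambda>x0. (\<Sum>k. ennreal (exp (t * real (Suc k)) / fact (Suc k)) *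
               (\<integral>\<^sup>+y. ennreal (gk v z a (Suc k) x0 y) \<partial>PX lam (Suc k))) \<le> ennreal (exp (a x0) - 1)"
  let ?R = "\<lambda>x'. (n \<ge> 1 \<longrightarrow> \<bar>\<rho> n x'\<bar> \<le> C * weight v z a t n x') \<and>
     (\<forall>k. AE y in PX lam (Suc k). \<bar>\<rho> (n + Suc k) (app n (Suc k) x' y)\<bar>
               \<le> C * weight v z a t (n + Suc k) (app n (Suc k) x' y))"
  have Q1: "AE u in PX lam 1. ?Q (u 0)"
    by (rule AE_PX1[OF sf]) (use KP in \<open>simp add: gk_def\<close>)
  have R: "AE x' in PX lam n. ?R x'"
  proof -
    have a: "AE x' in PX lam n. n \<ge> 1 \<longrightarrow> \<bar>\<rho> n x'\<bar> \<le> C * weight v z a t n x'"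
    proof (cases "n \<ge> 1")
      case True then show ?thesis using hb[of n] by simp
    qed simp
    have b: "AE x' in PX lam n. \<forall>k. AE y in PX lam (Suc k). \<bar>\<rho> (n + Suc k) (app n (Suc k) x' y)\<bar>
               \<le> C * weight v z a t (n + Suc k) (app n (Suc k) x' y)"
      by (subst AE_all_countable) (intro allI AE_fubini[OF sf] hb, simp)
    show ?thesis using a b by eventually_elim simp
  qed
  have "AE x in PX lam (1+n). ?Q ((\<lambda>i\<in>{..<1}. x i) 0) \<and> ?R (\<lambda>i\<in>{..<n}. x (1+i))"
    by (rule AE_split[OF sf Q1 R])
  then have "AE x in PX lam (Suc n). ?Q ((\<lambda>i\<in>{..<1}. x i) 0) \<and> ?R (\<lambda>i\<in>{..<n}. x (Suc i))"
    by (simp only: Suc_eq_plus1_left)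
  then have "AE x in PX lam (Suc n). ?Q (x 0) \<and> ?R (\<lambda>i\<in>{..<n}. x (Suc i))"
    by simp
  then show ?thesis
  proof (rule AE_mp, intro AE_I2 impI)
    fix x assume x: "x \<in> space (PX lam (Suc n))" and QR: "?Q (x 0) \<and> ?R (\<lambda>i\<in>{..<n}. x (Suc i))"
    show "(\<forall>k. integrable (PX lam (Suc k)) (Kint v \<rho> n x (Suc k))) \<and>
         summable (\<lambda>k. (\<integral>y. \<bar>Kint v \<rho> n x (Suc k) y\<bar> \<partial>PX lam (Suc k)) / fact (Suc k)) \<and>
         \<bar>Kop lam v z \<rho> (Suc n) x\<bar> \<le> exp (- t) * C * weight v z a t (Suc n) x"
      by (rule pointwise[OF rho C x]) (use QR in auto)
  qed
qed

end


lemma summable_from_abs: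
  fixes K :: "nat \<Rightarrow> 'b \<Rightarrow> real"
  assumes "summable (\<lambda>k. (\<integral>y. \<bar>K k y\<bar> \<partial>M k) / fact (Suc k))"
  shows "summable (\<lambda>k. (\<integral>y. K k y \<partial>M k) / fact (Suc k))"
  by (rule summable_comparison_test'[OF assms]) (simp add: divide_right_mono)

theorem mainTheorem14:
  fixes lam :: "('a::polish_space) measure"
    and v :: "'a \<Rightarrow> 'a \<Rightarrow> ennreal"
    and z a :: "'a \<Rightarrow> real"
    and t :: real
  assumes sets_lam: "sets lam = sets borel"
    and lam_fin: "\<And>B. B \<in> sets borel \<Longrightarrow> bounded B \<Longrightarrow> emeasure lam B < \<infinity>"
    and v_meas: "case_prod v \<in> borel_measurable (lam \<Otimes>\<^sub>M lam)"
    and v_sym: "\<And>x y. v x y = v y x"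
    and z_meas: "z \<in> borel_measurable lam"
    and z_nonneg: "\<And>x. 0 \<le> z x"
    and z_loc: "\<And>B. B \<in> sets borel \<Longrightarrow> bounded B \<Longrightarrow> (\<integral>\<^sup>+x\<in>B. ennreal (z x) \<partial>lam) < \<infinity>"
    and f_nonpos: "AE p in lam \<Otimes>\<^sub>M lam. mayer v (fst p) (snd p) \<le> 0"
    and a_meas: "a \<in> borel_measurable lam"
    and a_nonneg: "\<And>x. 0 \<le> a x"
    and t_pos: "0 < t"
    and KP: "AE x0 in lam.
      (\<Sum>k. ennreal (exp (t * real (Suc k)) / fact (Suc k)) *
        (\<integral>\<^sup>+y. ennreal ((\<Prod>j<Suc k. \<bar>mayer v x0 (y j)\<bar>) *
                 (\<Prod>j<Suc k. \<Prod>i<j. 1 + mayer v (y i) (y j)) *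
                 (\<Prod>j<Suc k. z (y j) * exp (a (y j)))) \<partial>PX lam (Suc k)))
      \<le> ennreal (exp (a x0) - 1)"
  shows "(\<forall>\<rho>\<in>E0 lam v z a t.
            (\<forall>n. AE x in PX lam (Suc n).
                 (\<forall>k. integrable (PX lam (Suc k)) (Kint v \<rho> n x (Suc k))) \<and>
                 summable (\<lambda>k. (\<integral>y. \<bar>Kint v \<rho> n x (Suc k) y\<bar> \<partial>PX lam (Suc k)) / fact (Suc k)))
          \<and> Kop lam v z \<rho> \<in> E0 lam v z a t
          \<and> norm0 lam v z a t (Kop lam v z \<rho>) \<le> exp (- t) * norm0 lam v z a t \<rho>)
       \<and> (\<forall>\<rho>\<in>E0 lam v z a t. \<forall>\<sigma>\<in>E0 lam v z a t. \<forall>c::real. \<forall>n\<ge>1.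
            AE x in PX lam n.
              Kop lam v z (\<lambda>m y. c * \<rho> m y + \<sigma> m y) n x = c * Kop lam v z \<rho> n x + Kop lam v z \<sigma> n x)
       \<and> exp (- t) < 1"
proof -
  interpret S: setting lam v z a t
    by (unfold_locales) (fact sets_lam lam_fin v_meas z_meas z_nonneg a_meas a_nonneg t_pos)+
  let ?S = "\<lambda>\<rho>. {C. 0 \<le> C \<and> (\<forall>n\<ge>1. AE x in PX lam n. \<bar>\<rho> n x\<bar> \<le> C * weight v z a t n x)}"
  have E0D: "(\<forall>n\<ge>1. \<rho> n \<in> borel_measurable (PX lam n)) \<and> ?S \<rho> \<noteq> {}" if "\<rho> \<in> E0 lam v z a t" for \<rho>
    using that unfolding E0_def by auto
  have MR: "AE x in PX lam (Suc n). (\<forall>k. integrable (PX lam (Suc k)) (Kint v \<rho> n x (Suc k))) \<and>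
         summable (\<lambda>k. (\<integral>y. \<bar>Kint v \<rho> n x (Suc k) y\<bar> \<partial>PX lam (Suc k)) / fact (Suc k)) \<and>
         \<bar>Kop lam v z \<rho> (Suc n) x\<bar> \<le> exp (- t) * C * weight v z a t (Suc n) x"
    if "\<rho> \<in> E0 lam v z a t" "C \<in> ?S \<rho>" for \<rho> C n
    using that E0D[OF that(1)] by (intro S.main_rho[OF _ _ _ KP]) auto
  have P1: "(\<forall>n. AE x in PX lam (Suc n).
                 (\<forall>k. integrable (PX lam (Suc k)) (Kint v \<rho> n x (Suc k))) \<and>
                 summable (\<lambda>k. (\<integral>y. \<bar>Kint v \<rho> n x (Suc k) y\<bar> \<partial>PX lam (Suc k)) / fact (Suc k)))
          \<and> Kop lam v z \<rho> \<in> E0 lam v z a t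
          \<and> norm0 lam v z a t (Kop lam v z \<rho>) \<le> exp (- t) * norm0 lam v z a t \<rho>"
    if rho: "\<rho> \<in> E0 lam v z a t" for \<rho>
  proof -
    obtain C0 where C0: "C0 \<in> ?S \<rho>" using E0D[OF rho] by blast
    have inS: "exp (- t) * C \<in> ?S (Kop lam v z \<rho>)" if C: "C \<in> ?S \<rho>" for C
    proof -
      have "\<forall>m\<ge>1. AE x in PX lam m. \<bar>Kop lam v z \<rho> m x\<bar> \<le> exp (- t) * C * weight v z a t m x"
      proof (intro allI impI)
        fix m :: nat assume "m \<ge> 1"
        then obtain n where m: "m = Suc n" by (cases m) auto
        show "AE x in PX lam m. \<bar>Kop lam v z \<rho> m x\<bar> \<le> exp (- t) * C * weight v z a t m x"
          unfolding m using MR[OF rho C, of n] by eventually_elim simp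
      qed
      then show ?thesis using C by simp
    qed
    have meas: "\<forall>m\<ge>1. Kop lam v z \<rho> m \<in> borel_measurable (PX lam m)"
    proof (intro allI impI)
      fix m :: nat assume "m \<ge> 1"
      then obtain n where m: "m = Suc n" by (cases m) auto
      show "Kop lam v z \<rho> m \<in> borel_measurable (PX lam m)"
        unfolding m by (rule S.Kop_meas) (use E0D[OF rho] in auto)
    qed
    have KE0: "Kop lam v z \<rho> \<in> E0 lam v z a t"
      unfolding E0_def using meas inS[OF C0] by blast
    have bdd: "bdd_below (?S (Kop lam v z \<rho>))" by (rule bdd_belowI[of _ 0]) auto
    have le: "norm0 lam v z a t (Kop lam v z \<rho>) \<le> exp (- t) * C" if C: "C \<in> ?S \<rho>" for C
      unfolding norm0_def by (rule cInf_lower[OF inS[OF C] bdd])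
    have "norm0 lam v z a t (Kop lam v z \<rho>) / exp (- t) \<le> norm0 lam v z a t \<rho>"
      unfolding norm0_def[of lam v z a t \<rho>]
    proof (rule cInf_greatest)
      show "?S \<rho> \<noteq> {}" using C0 by blast
      fix C assume "C \<in> ?S \<rho>"
      from le[OF this] show "norm0 lam v z a t (Kop lam v z \<rho>) / exp (- t) \<le> C"
        by (simp add: divide_simps mult.commute)
    qed
    then have N: "norm0 lam v z a t (Kop lam v z \<rho>) \<le> exp (- t) * norm0 lam v z a t \<rho>"
      by (simp add: divide_simps mult.commute)
    have A: "\<forall>n. AE x in PX lam (Suc n).
                 (\<forall>k. integrable (PX lam (Suc k)) (Kint v \<rho> n x (Suc k))) \<and>
                 summable (\<lambda>k. (\<integral>y. \<bar>Kint v \<rho> n x (Suc k) y\<bar> \<partial>PX lam (Suc k)) / fact (Suc k))"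
    proof
      fix n show "AE x in PX lam (Suc n).
                 (\<forall>k. integrable (PX lam (Suc k)) (Kint v \<rho> n x (Suc k))) \<and>
                 summable (\<lambda>k. (\<integral>y. \<bar>Kint v \<rho> n x (Suc k) y\<bar> \<partial>PX lam (Suc k)) / fact (Suc k))"
        using MR[OF rho C0, of n] by eventually_elim simp
    qed
    show ?thesis using A KE0 N by blast
  qed
  have P2: "AE x in PX lam n.
              Kop lam v z (\<lambda>m y. c * \<rho> m y + \<sigma> m y) n x = c * Kop lam v z \<rho> n x + Kop lam v z \<sigma> n x"
    if rho: "\<rho> \<in> E0 lam v z a t" and sig: "\<sigma> \<in> E0 lam v z a t" and n: "n \<ge> 1" for \<rho> \<sigma> c n
  proof -
    obtain n' where n': "n = Suc n'" using n by (cases n) auto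
    obtain C1 where C1: "C1 \<in> ?S \<rho>" using E0D[OF rho] by blast
    obtain C2 where C2: "C2 \<in> ?S \<sigma>" using E0D[OF sig] by blast
    show ?thesis unfolding n'
      using MR[OF rho C1, of n'] MR[OF sig C2, of n']
    proof eventually_elim
      case (elim x)
      let ?I = "\<lambda>r k. (\<integral>y. Kint v r n' x (Suc k) y \<partial>PX lam (Suc k)) / fact (Suc k)"
      have s1: "summable (?I \<rho>)" by (rule summable_from_abs) (use elim in blast)
      have s2: "summable (?I \<sigma>)" by (rule summable_from_abs) (use elim in blast)
      have Ke: "Kint v (\<lambda>m y. c * \<rho> m y + \<sigma> m y) n' x k = (\<lambda>y. c * Kint v \<rho> n' x k y + Kint v \<sigma> n' x k y)" for k
        unfolding Kint_def by (simp add: fun_eq_iff algebra_simps)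
      have Ie: "?I (\<lambda>m y. c * \<rho> m y + \<sigma> m y) k = c * ?I \<rho> k + ?I \<sigma> k" for k
      proof -
        have i1: "integrable (PX lam (Suc k)) (Kint v \<rho> n' x (Suc k))" using elim by blast
        have i2: "integrable (PX lam (Suc k)) (Kint v \<sigma> n' x (Suc k))" using elim by blast
        have "(\<integral>y. c * Kint v \<rho> n' x (Suc k) y + Kint v \<sigma> n' x (Suc k) y \<partial>PX lam (Suc k))
            = c * (\<integral>y. Kint v \<rho> n' x (Suc k) y \<partial>PX lam (Suc k)) + (\<integral>y. Kint v \<sigma> n' x (Suc k) y \<partial>PX lam (Suc k))"
          using i1 i2 by simp
        then show ?thesis unfolding Ke by (simp add: add_divide_distrib)
      qed
      have Se: "(\<Sum>k. ?I (\<lambda>m y. c * \<rho> m y + \<sigma> m y) k) = c * (\<Sum>k. ?I \<rho> k) + (\<Sum>k. ?I \<sigma> k)"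
      proof -
        have "(\<Sum>k. c * ?I \<rho> k + ?I \<sigma> k) = (\<Sum>k. c * ?I \<rho> k) + (\<Sum>k. ?I \<sigma> k)"
          by (rule suminf_add[symmetric, OF summable_mult[OF s1] s2])
        also have "(\<Sum>k. c * ?I \<rho> k) = c * (\<Sum>k. ?I \<rho> k)" by (rule suminf_mult[OF s1])
        finally show ?thesis unfolding Ie .
      qed
      show ?case
        unfolding Kop_def nat.case Se by (simp add: algebra_simps)
    qed
  qed
  have P3: "exp (- t) < 1" using t_pos by simp
  show ?thesis
    apply (intro conjI)
      apply (intro ballI, rule P1, assumption)
     apply (intro ballI allI impI, rule P2, assumption+)
    by (rule P3)
qed


end
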